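(* For every Dale matrix $W\in\mathbb{D}_n$ satisfying the Ground Assumption, the code $\mathcal{C}(W)$ is intersection-complete (if $\sigma,\nu\in\mathcal{C}(W)$ then $\sigma\cap\nu\in\mathcal{C}(W)$), and consequently $\mathcal{C}(W)$ is an open convex code.
   Context: Threshold-linear network: $\dot x_i=-x_i+[\sum_j W_{ij}x_j+b_i]_+$ with $[y]_+=\max(0,y)$; a fixed point is $x^*$ with $x^*=[Wx^*+b]_+$. A Dale matrix $W\in\mathbb{D}_n$ is an $n\times n$ real matrix with a partition $[n]=\mathcal{E}\sqcup\mathcal{I}$ such that $W_{ii}=0$, $W_{ji}\ge0$ for all $j$ if $i\in\mathcal{E}$, $W_{ji}\le0$ for all $j$ if $i\in\mathcal{I}$. Ground Assumption: $(I-W)_\sigma$ nonsingular for every nonempty $\sigma\subset[n]$. Excitatory support: $\mathrm{supp}_+x=\{i\in\mathcal{E}:x_i>0\}$. Combinatorial code: $\mathcal{C}(W)=\{\mathrm{supp}_+x^*: b\in\mathbb{R}^n_{\ge0},\ x^*\in\mathbb{R}^n_{\ge0}\text{ a fixed point of }(W,b)\}\subset 2^\mathcal{E}$. For a collection $\mathcal{U}=\{U_i\}_{i\in\mathcal{E}}$ of subsets of $\mathbb{R}^d$, $\mathrm{code}(\mathcal{U})=\{\sigma\subset\mathcal{E}: (\bigcap_{i\in\sigma}U_i)\setminus\bigcup_{j\notin\sigma}U_j\neq\varnothing\}$ (with $\bigcap_{i\in\varnothing}U_i=\mathbb{R}^d$). A code $\mathcal{C}\subset 2^{\mathcal{E}}$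 is open convex if $\mathcal{C}=\mathrm{code}(\mathcal{U})$ for some collection $\mathcal{U}$ of open convex subsets of some $\mathbb{R}^d$, $d\ge1$. *)

theory Defs
  imports "Jordan_Normal_Form.Determinant" "Jordan_Normal_Form.DL_Submatrix"
          "HOL-Analysis.Abstract_Euclidean_Space"
begin

definition dale_matrix :: "nat \<Rightarrow> real mat \<Rightarrow> nat set \<Rightarrow> nat set \<Rightarrow> bool" where
  "dale_matrix n W E I \<longleftrightarrow> W \<in> carrier_mat n n \<and> E \<union> I = {..<n} \<and> E \<inter> I = {} \<and>
     (\<forall>i<n. W $$ (i,i) = 0) \<and>
     (\<forall>i\<in>E. \<forall>j<n. W $$ (j,i) \<ge> 0) \<and>
     (\<forall>i\<in>I. \<forall>j<n. W $$ (j,i) \<le> 0)"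

definition ground_assumption :: "nat \<Rightarrow> real mat \<Rightarrow> bool" where
  "ground_assumption n W \<longleftrightarrow>
     (\<forall>\<sigma>. \<sigma> \<noteq> {} \<and> \<sigma> \<subseteq> {..<n} \<longrightarrow> det (submatrix (1\<^sub>m n - W) \<sigma> \<sigma>) \<noteq> 0)"

definition is_fixed_point :: "nat \<Rightarrow> real mat \<Rightarrow> real Matrix.vec \<Rightarrow> real Matrix.vec \<Rightarrow> bool" where
  "is_fixed_point n W b x \<longleftrightarrow> x \<in> carrier_vec n \<and> b \<in> carrier_vec n \<and>
     (\<forall>i<n. vec_index x i = max 0 (vec_index (Matrix.mult_mat_vec W x) i + vec_index b i))"

definition supp_plus :: "nat set \<Rightarrow> real Matrix.vec \<Rightarrow> nat set" where
  "supp_plus E x = {i \<in> E. vec_index x i > 0}"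

definition comb_code :: "nat \<Rightarrow> real mat \<Rightarrow> nat set \<Rightarrow> nat set set" where
  "comb_code n W E = {supp_plus E x | b x. b \<in> carrier_vec n \<and> (\<forall>i<n. vec_index b i \<ge> 0) \<and>
      x \<in> carrier_vec n \<and> (\<forall>i<n. vec_index x i \<ge> 0) \<and> is_fixed_point n W b x}"

definition intersection_complete :: "'a set set \<Rightarrow> bool" where
  "intersection_complete C \<longleftrightarrow> (\<forall>\<sigma>\<in>C. \<forall>\<nu>\<in>C. \<sigma> \<inter> \<nu> \<in> C)"

text \<open>R^d is modelled as topspace (Euclidean_space d): functions nat => real vanishing from d on.\<close>

definition convex_Rd :: "(nat \<Rightarrow> real) set \<Rightarrow> bool" where
  "convex_Rd U \<longleftrightarrow> (\<forall>x\<in>U. \<forall>y\<in>U. \<forall>t::real. 0 \<le> t \<and> t \<le> 1 \<longrightarrow> (\<lambda>i. (1 - t) * x i + t * y i) \<in> U)"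

definition code_of :: "nat \<Rightarrow> nat set \<Rightarrow> (nat \<Rightarrow> (nat \<Rightarrow> real) set) \<Rightarrow> nat set set" where
  "code_of d E U = {\<sigma>. \<sigma> \<subseteq> E \<and>
      (\<exists>p\<in>topspace (Euclidean_space d). (\<forall>i\<in>\<sigma>. p \<in> U i) \<and> (\<forall>j\<in>E - \<sigma>. p \<notin> U j))}"

definition open_convex_code :: "nat set \<Rightarrow> nat set set \<Rightarrow> bool" where
  "open_convex_code E C \<longleftrightarrow> (\<exists>d\<ge>1. \<exists>U. (\<forall>i\<in>E. openin (Euclidean_space d) (U i) \<and> convex_Rd (U i))
      \<and> C = code_of d E U)"

end

theory Submission
  imports Defs
begin

unbundle no vec_syntax
no_notation matrix_vector_mult (infixl "*v" 70)
notation Matrix.mult_mat_vec (infixl "*v" 70)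

lemma mv_formula:
  assumes "W \<in> carrier_mat n n" "x \<in> carrier_vec n" "i < n"
  shows "(W *v x) $ i = (\<Sum>k<n. W $$ (i,k) * x $ k)"
  using assms by (auto simp: scalar_prod_def lessThan_atLeast0 intro!: sum.cong)

lemma comb_code_iff:
  "\<sigma> \<in> comb_code n W E \<longleftrightarrow> (\<exists>x\<in>carrier_vec n. (\<forall>i<n. 0 \<le> x$i) \<and> (\<forall>i<n. (W*v x)$i \<le> x$i)
      \<and> \<sigma> = supp_plus E x)"
proof
  assume "\<sigma> \<in> comb_code n W E"
  then obtain b x where h: "b \<in> carrier_vec n" "\<forall>i<n. b$i \<ge> 0" "x \<in> carrier_vec n"
    "\<forall>i<n. x$i \<ge> 0" "is_fixed_point n W b x" "\<sigma> = supp_plus E x"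
    unfolding comb_code_def by blast
  have "\<forall>i<n. (W*v x)$i \<le> x$i"
  proof (intro allI impI)
    fix i assume "i < n"
    then have "x$i = max 0 ((W *v x)$i + b$i)" using h(5) unfolding is_fixed_point_def by blast
    then show "(W*v x)$i \<le> x$i" using h(2) \<open>i<n\<close> by force
  qed
  then show "\<exists>x\<in>carrier_vec n. (\<forall>i<n. 0 \<le> x$i) \<and> (\<forall>i<n. (W*v x)$i \<le> x$i) \<and> \<sigma> = supp_plus E x"
    using h by blast
next
  assume "\<exists>x\<in>carrier_vec n. (\<forall>i<n. 0 \<le> x$i) \<and> (\<forall>i<n. (W*v x)$i \<le> x$i) \<and> \<sigma> = supp_plus E x"
  then obtain x where h: "x\<in>carrier_vec n" "\<forall>i<n. 0 \<le> x$i" "\<forall>i<n. (W*v x)$i \<le> x$i" "\<sigma> = supp_plus E x"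
    by blast
  define b where "b = Matrix.vec n (\<lambda>i. x$i - (W*v x)$i)"
  have "b \<in> carrier_vec n" "\<forall>i<n. b$i \<ge> 0" using h by (auto simp: b_def)
  moreover have "is_fixed_point n W b x"
    using h unfolding is_fixed_point_def b_def by auto
  ultimately show "\<sigma> \<in> comb_code n W E" using h unfolding comb_code_def by blast
qed

lemma code_inter:
  assumes D: "dale_matrix n W E I"
    and s: "\<sigma> \<in> comb_code n W E" and v: "\<nu> \<in> comb_code n W E"
  shows "\<sigma> \<inter> \<nu> \<in> comb_code n W E"
proof -
  have W: "W \<in> carrier_mat n n" using D unfolding dale_matrix_def by blast
  obtain x where x: "x\<in>carrier_vec n" "\<forall>i<n. 0 \<le> x$i" "\<forall>i<n. (W*v x)$i \<le> x$i" "\<sigma> = supp_plus E x"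
    using s comb_code_iff by blast
  obtain y where y: "y\<in>carrier_vec n" "\<forall>i<n. 0 \<le> y$i" "\<forall>i<n. (W*v y)$i \<le> y$i" "\<nu> = supp_plus E y"
    using v comb_code_iff by blast
  define z where "z = Matrix.vec n (\<lambda>i. if i \<in> E then min (x$i) (y$i) else max (x$i) (y$i))"
  have zc: "z \<in> carrier_vec n" by (simp add: z_def)
  have z0: "\<forall>i<n. 0 \<le> z$i" using x y by (auto simp: z_def)
  have le: "(W*v z)$i \<le> (W*v x)$i \<and> (W*v z)$i \<le> (W*v y)$i" if i: "i < n" for i
  proof -
    have t: "W $$ (i,k) * z $ k \<le> W $$ (i,k) * x $ k \<and> W $$ (i,k) * z $ k \<le> W $$ (i,k) * y $ k"
      if k: "k < n" for k
    proof (cases "k \<in> E")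
      case True
      then have "W $$ (i,k) \<ge> 0" using D i unfolding dale_matrix_def by blast
      moreover have "z$k \<le> x$k" "z$k \<le> y$k" using True k by (auto simp: z_def)
      ultimately show ?thesis by (simp add: mult_left_mono)
    next
      case False
      then have "k \<in> I" using D k unfolding dale_matrix_def by blast
      then have "W $$ (i,k) \<le> 0" using D i unfolding dale_matrix_def by blast
      moreover have "z$k \<ge> x$k" "z$k \<ge> y$k" using False k by (auto simp: z_def)
      ultimately show ?thesis by (simp add: mult_left_mono_neg)
    qed
    show ?thesis
      unfolding mv_formula[OF W zc i] mv_formula[OF W x(1) i] mv_formula[OF W y(1) i]
      using t by (intro conjI sum_mono) auto
  qed
  have zW: "\<forall>i<n. (W*v z)$i \<le> z$i"
  proof (intro allI impI)
    fix i assume i: "i < n"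
    show "(W*v z)$i \<le> z$i"
    proof (cases "i \<in> E")
      case True
      then show ?thesis using le[OF i] x(3) y(3) i by (auto simp: z_def)
    next
      case False
      then show ?thesis using le[OF i] x(3) y(3) i by (force simp: z_def)
    qed
  qed
  have E: "E \<subseteq> {..<n}" using D unfolding dale_matrix_def by blast
  have "supp_plus E z = \<sigma> \<inter> \<nu>"
    using x(4) y(4) E by (auto simp: supp_plus_def z_def)
  then show ?thesis using comb_code_iff zc z0 zW by blast
qed

lemma code_union:
  assumes D: "dale_matrix n W E I"
    and s: "\<sigma> \<in> comb_code n W E" and v: "\<nu> \<in> comb_code n W E"
  shows "\<sigma> \<union> \<nu> \<in> comb_code n W E"
proof -
  have W: "W \<in> carrier_mat n n" using D unfolding dale_matrix_def by blast
  obtain x where x: "x\<in>carrier_vec n" "\<forall>i<n. 0 \<le> x$i" "\<forall>i<n. (W*v x)$i \<le> x$i" "\<sigma> = supp_plus E x"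
    using s comb_code_iff by blast
  obtain y where y: "y\<in>carrier_vec n" "\<forall>i<n. 0 \<le> y$i" "\<forall>i<n. (W*v y)$i \<le> y$i" "\<nu> = supp_plus E y"
    using v comb_code_iff by blast
  define z where "z = Matrix.vec n (\<lambda>i. x$i + y$i)"
  have zc: "z \<in> carrier_vec n" by (simp add: z_def)
  have z0: "\<forall>i<n. 0 \<le> z$i" using x y by (auto simp: z_def)
  have zW: "\<forall>i<n. (W*v z)$i \<le> z$i"
  proof (intro allI impI)
    fix i assume i: "i < n"
    have "(W*v z)$i = (W*v x)$i + (W*v y)$i"
      using mv_formula[OF W zc i] mv_formula[OF W x(1) i] mv_formula[OF W y(1) i]
      by (simp add: z_def distrib_left sum.distrib)
    moreover have "(W*v x)$i \<le> x$i" "(W*v y)$i \<le> y$i" using x(3) y(3) i by auto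
    ultimately show "(W*v z)$i \<le> z$i" using i by (simp add: z_def)
  qed
  have E: "E \<subseteq> {..<n}" using D unfolding dale_matrix_def by blast
  have "supp_plus E z = \<sigma> \<union> \<nu>"
    using x y E by (force simp: supp_plus_def z_def)
  then show ?thesis using comb_code_iff zc z0 zW by blast
qed

lemma code_empty: assumes "E \<subseteq> {..<n}" "W \<in> carrier_mat n n" shows "{} \<in> comb_code n W E"
proof -
  have "supp_plus E (0\<^sub>v n) = {}" using assms by (auto simp: supp_plus_def)
  moreover have "\<forall>i<n. (W*v 0\<^sub>v n)$i \<le> (0\<^sub>v n :: real Matrix.vec)$i"
    using mv_formula[OF assms(2), of "0\<^sub>v n"] by auto
  ultimately show ?thesis using comb_code_iff[of "{}" n W E] by force
qed

lemma openin_pos: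
  assumes "finite K"
  shows "openin (Euclidean_space d) {p \<in> topspace (Euclidean_space d). \<forall>k\<in>K. 0 < p k}"
  using assms
proof (induction K rule: finite_induct)
  case empty
  then show ?case by simp
next
  case (insert k K)
  have c: "continuous_map (Euclidean_space d) euclideanreal (\<lambda>x. x k)"
    unfolding Euclidean_space_def
    by (intro continuous_map_from_subtopology continuous_map_product_projection) simp
  have o: "openin (Euclidean_space d) {p \<in> topspace (Euclidean_space d). p k \<in> {0<..}}"
    by (rule openin_continuous_map_preimage[OF c]) simp
  have "{p \<in> topspace (Euclidean_space d). \<forall>j\<in>insert k K. 0 < p j} =
        {p \<in> topspace (Euclidean_space d). p k \<in> {0<..}} \<inter> {p \<in> topspace (Euclidean_space d). \<forall>k\<in>K. 0 < p k}"
    by auto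
  then show ?case using o insert.IH by (simp add: openin_Int)
qed

lemma Inter_closed:
  assumes "finite F" "F \<noteq> {}" "F \<subseteq> C" "\<forall>\<sigma>\<in>C. \<forall>\<nu>\<in>C. \<sigma>\<inter>\<nu> \<in> C"
  shows "\<Inter>F \<in> C"
  using assms by (induction F rule: finite_ne_induct) auto

lemma Union_closed:
  assumes "finite F" "F \<subseteq> C" "{} \<in> C" "\<forall>\<sigma>\<in>C. \<forall>\<nu>\<in>C. \<sigma>\<union>\<nu> \<in> C"
  shows "\<Union>F \<in> C"
  using assms by (induction F rule: finite_induct) auto

lemma lattice_open_convex:
  fixes C :: "nat set set"
  assumes E: "E \<subseteq> {..<n}" and sub: "\<forall>\<sigma>\<in>C. \<sigma> \<subseteq> E" and emp: "{} \<in> C"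
    and un: "\<forall>\<sigma>\<in>C. \<forall>\<nu>\<in>C. \<sigma>\<union>\<nu> \<in> C" and int: "\<forall>\<sigma>\<in>C. \<forall>\<nu>\<in>C. \<sigma>\<inter>\<nu> \<in> C"
  shows "open_convex_code E C"
proof -
  define J where "J i = \<Inter>{\<sigma>\<in>C. i\<in>\<sigma>}" for i
  define T where "T = topspace (Euclidean_space (Suc n))"
  define U where "U i = (if \<exists>\<sigma>\<in>C. i\<in>\<sigma> then {p\<in>T. \<forall>k\<in>J i. 0 < p k} else {})" for i
  have finE: "finite E" using E finite_subset by blast
  have finC: "finite C" using sub finE by (meson Pow_iff finite_Pow_iff finite_subset subsetI)
  have JC: "J i \<in> C" if "\<sigma> \<in> C" "i \<in> \<sigma>" for i \<sigma>
    unfolding J_def using that finC int by (intro Inter_closed) auto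
  have Jsub: "J i \<subseteq> \<sigma>" if "\<sigma> \<in> C" "i \<in> \<sigma>" for i \<sigma>
    unfolding J_def using that by auto
  have Jmem: "i \<in> J i" for i unfolding J_def by auto
  have finJ: "finite (J i)" if "\<sigma> \<in> C" "i \<in> \<sigma>" for i \<sigma>
    using Jsub[OF that] sub that finE by (meson finite_subset)
  have opn: "openin (Euclidean_space (Suc n)) (U i)" for i
    using finJ openin_pos unfolding U_def T_def by auto
  have cvx: "convex_Rd (U i)" for i
  proof (cases "\<exists>\<sigma>\<in>C. i\<in>\<sigma>")
    case True
    show ?thesis unfolding convex_Rd_def
    proof (intro ballI allI impI)
      fix x y and t :: real assume x: "x \<in> U i" and y: "y \<in> U i" and t: "0 \<le> t \<and> t \<le> 1"
      have xT: "x \<in> T" "\<forall>k\<in>J i. 0 < x k" using x True by (auto simp: U_def)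
      have yT: "y \<in> T" "\<forall>k\<in>J i. 0 < y k" using y True by (auto simp: U_def)
      have "(\<lambda>j. (1 - t) * x j + t * y j) \<in> T"
        using xT(1) yT(1) by (auto simp: T_def topspace_Euclidean_space)
      moreover have "0 < (1 - t) * x k + t * y k" if "k \<in> J i" for k
      proof (cases "t = 0")
        case True then show ?thesis using xT that by simp
      next
        case False
        then have "0 < t * y k" using t yT that by simp
        moreover have "0 \<le> (1 - t) * x k" using t xT that by (intro mult_nonneg_nonneg) auto
        ultimately show ?thesis by linarith
      qed
      ultimately show "(\<lambda>j. (1 - t) * x j + t * y j) \<in> U i" using True by (auto simp: U_def)
    qed
  next
    case False
    then show ?thesis by (simp add: U_def convex_Rd_def)
  qed
  have code: "C = code_of (Suc n) E U"
  proof
    show "C \<subseteq> code_of (Suc n) E U"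
    proof
      fix \<sigma> assume s: "\<sigma> \<in> C"
      define p where "p k = (if k \<in> \<sigma> then 1 else 0::real)" for k
      have pT: "p \<in> T" using s sub E by (force simp: p_def T_def topspace_Euclidean_space)
      have "p \<in> U i" if "i \<in> \<sigma>" for i
        using Jsub[OF s that] s that pT by (auto simp: U_def p_def)
      moreover have "p \<notin> U j" if "j \<in> E - \<sigma>" for j
      proof
        assume "p \<in> U j"
        then have "\<forall>k\<in>J j. 0 < p k" by (auto simp: U_def split: if_splits)
        then have "j \<in> \<sigma>" using Jmem[of j] by (auto simp: p_def split: if_splits)
        then show False using that by blast
      qed
      ultimately show "\<sigma> \<in> code_of (Suc n) E U"
        using s sub pT unfolding code_of_def T_def by blast
    qed
  next
    show "code_of (Suc n) E U \<subseteq> C"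
    proof
      fix \<sigma> assume "\<sigma> \<in> code_of (Suc n) E U"
      then have "\<sigma> \<subseteq> E \<and> (\<exists>p\<in>topspace (Euclidean_space (Suc n)). (\<forall>i\<in>\<sigma>. p \<in> U i) \<and> (\<forall>j\<in>E - \<sigma>. p \<notin> U j))"
        unfolding code_of_def by simp
      then obtain p where sE: "\<sigma> \<subseteq> E" and pT: "p \<in> T" and
        pin: "\<forall>i\<in>\<sigma>. p \<in> U i" and pout: "\<forall>j\<in>E - \<sigma>. p \<notin> U j"
        unfolding T_def by blast
      have ex: "\<exists>\<tau>\<in>C. i\<in>\<tau>" if "i \<in> \<sigma>" for i
      proof (rule ccontr)
        assume "\<not> (\<exists>\<tau>\<in>C. i\<in>\<tau>)"
        then have "U i = {}" unfolding U_def by (rule if_not_P)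
        then show False using pin that by blast
      qed
      have eq: "\<Union>(J ` \<sigma>) = \<sigma>"
      proof
        show "\<sigma> \<subseteq> \<Union>(J ` \<sigma>)" using Jmem by blast
        show "\<Union>(J ` \<sigma>) \<subseteq> \<sigma>"
        proof
          fix k assume "k \<in> \<Union>(J ` \<sigma>)"
          then obtain i where i: "i \<in> \<sigma>" and k: "k \<in> J i" by blast
          obtain \<tau> where \<tau>: "\<tau> \<in> C" "i \<in> \<tau>" using ex[OF i] by blast
          have JiC: "J i \<in> C" using JC[OF \<tau>] .
          have kE: "k \<in> E" using JiC k sub by blast
          have Jk: "J k \<subseteq> J i" using Jsub[OF JiC k] .
          have Ui: "U i = {p\<in>T. \<forall>k\<in>J i. 0 < p k}" unfolding U_def using ex[OF i] by (rule if_P)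
          have pi: "\<forall>m\<in>J i. 0 < p m" using bspec[OF pin i] unfolding Ui by blast
          have exk: "\<exists>\<tau>\<in>C. k\<in>\<tau>" using JiC k by blast
          have Uk: "U k = {p\<in>T. \<forall>m\<in>J k. 0 < p m}" unfolding U_def using exk by (rule if_P)
          have "p \<in> U k" unfolding Uk using Jk pi pT by blast
          then show "k \<in> \<sigma>" using pout kE by (meson DiffI)
        qed
      qed
      have "finite \<sigma>" using finite_subset[OF sE finE] .
      moreover have "J ` \<sigma> \<subseteq> C"
      proof
        fix X assume "X \<in> J ` \<sigma>"
        then obtain i where i: "i \<in> \<sigma>" "X = J i" by blast
        obtain \<tau> where "\<tau> \<in> C" "i \<in> \<tau>" using ex[OF i(1)] by blast
        then show "X \<in> C" using JC i(2) by blast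
      qed
      ultimately have "\<Union>(J ` \<sigma>) \<in> C" by (intro Union_closed[OF _ _ emp un] finite_imageI)
      then show "\<sigma> \<in> C" using eq by simp
    qed
  qed
  have "Suc n \<ge> 1 \<and> (\<forall>i\<in>E. openin (Euclidean_space (Suc n)) (U i) \<and> convex_Rd (U i))
      \<and> C = code_of (Suc n) E U" using opn cvx code by simp
  then show ?thesis unfolding open_convex_code_def by blast
qed

theorem mainTheorem7:
  fixes n :: nat and W :: "real mat" and E I :: "nat set"
  assumes "dale_matrix n W E I"
    and "ground_assumption n W"
  shows "intersection_complete (comb_code n W E) \<and> open_convex_code E (comb_code n W E)"
proof -
  have E: "E \<subseteq> {..<n}" and W: "W \<in> carrier_mat n n"
    using assms(1) unfolding dale_matrix_def by blast+
  have sub: "\<forall>\<sigma>\<in>comb_code n W E. \<sigma> \<subseteq> E"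
    unfolding comb_code_def supp_plus_def by blast
  have int: "\<forall>\<sigma>\<in>comb_code n W E. \<forall>\<nu>\<in>comb_code n W E. \<sigma>\<inter>\<nu> \<in> comb_code n W E"
    using code_inter[OF assms(1)] by blast
  have un: "\<forall>\<sigma>\<in>comb_code n W E. \<forall>\<nu>\<in>comb_code n W E. \<sigma>\<union>\<nu> \<in> comb_code n W E"
    using code_union[OF assms(1)] by blast
  show ?thesis
    using int lattice_open_convex[OF E sub code_empty[OF E W] un int]
    unfolding intersection_complete_def by blast
qed

end
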